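(* Let $A$ be an $m$-dimensional permutation array of even order $n$ defined by a bijection $\varphi:[n_1]\times\cdots\times[n_{m-1}]\to[n_m]$. Let $E=\{i\in[m-1]: n_i\text{ is even}\}$ and $\theta=1-\prod_{i\in E}\frac{n_i-1}{n_i}$ (with $\theta=0$ if $E=\emptyset$). If $\theta<\frac{n-2}{2n}$, then there is an $n_1\times\cdots\times n_m$ window in the periodic extension of $A$ which has a repeated difference vector. In particular, if $A$ is an $m$-dimensional Costas array with $\theta<\frac{n-2}{2n}$, then $A$ is not periodic Costas.
   Context: For $n\in\mathbb{N}$, $[n]=\{1,\dots,n\}$; $m\ge2$, all $n_i\ge2$. A binary array $A:[n_1]\times\cdots\times[n_m]\to\{0,1\}$ is an $m$-dimensional permutation array if there exist $k$ with $1\le k<m$ and a bijection $\varphi:[n_1]\times\cdots\times[n_k]\to[n_{k+1}]\times\cdots\times[n_m]$ with $A(a_1,\dots,a_m)=1$ iff $\varphi(a_1,\dots,a_k)=(a_{k+1},\dots,a_m)$ (here $k=m-1$); points with value 1 are dots; the order is the number of dots, here $n=n_1\cdots n_{m-1}=n_m$. The periodic extension $\mathbb{A}:\mathbb{Z}^m\to\{0,1\}$ is $\mathbb{A}(a_1,\dots,a_m)=A(a_1',\dots,a_m')$ with $a_i'\in[n_i]$, $a_i'\equiv a_i\pmod{n_i}$; an $n_1\times\cdots\times n_m$ window is the restriction of $\mathbb{A}$ to a box $\prod_i\{k_i,\dots,k_i+n_i-1\}$, $k_i\in\mathbb{Z}$. The difference vector from dot $(a_i)$ to a distinct dot $(w_i)$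 is $\langle w_i-a_i\rangle_i$; a window has a repeated difference vector if two distinct ordered pairs of distinct dots in it have equal difference vectors. An $m$-dimensional Costas array is a permutation array with no repeated difference vector; it is periodic Costas if every $n_1\times\cdots\times n_m$ window of its periodic extension has no repeated difference vector. *)

theory Defs
  imports Complex_Main
begin

text \<open>Points of Z^m are int lists of length m; coordinate i (1-based in the paper)
  is list position i-1. The size vector (n_1,...,n_m) is a nat list ns.\<close>

definition box :: "nat list \<Rightarrow> int list set" where
  "box ns = {a. length a = length ns \<and>
     (\<forall>i<length ns. 1 \<le> a!i \<and> a!i \<le> int (ns!i))}"

definition perm_array :: "nat list \<Rightarrow> (int list \<Rightarrow> int) \<Rightarrow> int list \<Rightarrow> bool" where
  "perm_array ns \<phi> a \<longleftrightarrow> a \<in> box ns \<and> \<phi> (butlast a) = last a"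

definition periodic_ext :: "nat list \<Rightarrow> (int list \<Rightarrow> bool) \<Rightarrow> int list \<Rightarrow> bool" where
  "periodic_ext ns A a = A (map2 (\<lambda>x n. (x - 1) mod int n + 1) a ns)"

definition window :: "nat list \<Rightarrow> int list \<Rightarrow> int list set" where
  "window ns k = {a. length a = length ns \<and>
     (\<forall>i<length ns. k!i \<le> a!i \<and> a!i \<le> k!i + int (ns!i) - 1)}"

definition diff_vec :: "int list \<Rightarrow> int list \<Rightarrow> int list" where
  "diff_vec a w = map2 (-) w a"

definition has_repeated_diff :: "int list set \<Rightarrow> bool" where
  "has_repeated_diff D \<longleftrightarrow> (\<exists>a\<in>D. \<exists>w\<in>D. \<exists>b\<in>D. \<exists>v\<in>D.
      a \<noteq> w \<and> b \<noteq> v \<and> (a, w) \<noteq> (b, v) \<and> diff_vec a w = diff_vec b v)"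

definition window_dots :: "nat list \<Rightarrow> (int list \<Rightarrow> bool) \<Rightarrow> int list \<Rightarrow> int list set" where
  "window_dots ns A k = {a \<in> window ns k. periodic_ext ns A a}"

definition is_costas :: "nat list \<Rightarrow> (int list \<Rightarrow> bool) \<Rightarrow> bool" where
  "is_costas ns A \<longleftrightarrow> \<not> has_repeated_diff {a \<in> box ns. A a}"

definition is_periodic_costas :: "nat list \<Rightarrow> (int list \<Rightarrow> bool) \<Rightarrow> bool" where
  "is_periodic_costas ns A \<longleftrightarrow>
     (\<forall>k. length k = length ns \<longrightarrow> \<not> has_repeated_diff (window_dots ns A k))"

definition theta :: "nat list \<Rightarrow> real" where
  "theta ns = 1 - (\<Prod>i\<in>{i. i < length ns - 1 \<and> even (ns!i)}.
                     (real (ns!i) - 1) / real (ns!i))"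

end

theory Submission
  imports Defs
begin


lemma mod_hi: "(n::int) \<le> x \<Longrightarrow> x < 2*n \<Longrightarrow> x mod n = x - n"
proof -
  assume a: "n \<le> x" "x < 2*n"
  have "x mod n = (x - n) mod n" by simp
  also have "\<dots> = x - n" using a by (intro mod_pos_pos_trivial) auto
  finally show ?thesis .
qed

lemma mod_lo: "- (n::int) \<le> x \<Longrightarrow> x < 0 \<Longrightarrow> x mod n = x + n"
proof -
  assume a: "- n \<le> x" "x < 0"
  have "x mod n = (x + n) mod n" by simp
  also have "\<dots> = x + n" using a by (intro mod_pos_pos_trivial) auto
  finally show ?thesis .
qed

lemma eq_of_mod0:
  fixes u v n :: int
  assumes "1 \<le> u" "u \<le> n" "1 \<le> v" "v \<le> n" "(u - v) mod n = 0"
  shows "u = v"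
proof (cases "u - v \<ge> 0")
  case True
  hence "(u - v) mod n = u - v" using assms by (intro mod_pos_pos_trivial) auto
  thus ?thesis using assms by simp
next
  case False
  hence "(u - v) mod n = u - v + n" using assms by (intro mod_lo) auto
  thus ?thesis using assms by simp
qed

lemma shift_choice:
  fixes n a b a' b' :: int
  assumes n: "n > 0" and ab: "1 \<le> a" "a \<le> n" "1 \<le> b" "b \<le> n" "1 \<le> a'" "a' \<le> n" "1 \<le> b'" "b' \<le> n"
    and eq: "(b - a) mod n = (b' - a') mod n" and nc: "\<not>(a' = b \<and> b' = a)"
  shows "\<exists>c. (b-c) mod n - (a-c) mod n = (b'-c) mod n - (a'-c) mod n"
proof -
  define r where "r = (b - a) mod n"
  define t where "t = (a' - a) mod n"
  have r0: "0 \<le> r" "r < n" using n by (simp_all add: r_def)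
  have t0: "0 \<le> t" "t < n" using n by (simp_all add: t_def)
  have rb: "(b' - a') mod n = r" using eq r_def by simp
  have tr: "(b' - a) mod n = (t + r) mod n"
  proof -
    have "(b' - a) = (a' - a) + (b' - a')" by simp
    hence "(b' - a) mod n = ((a' - a) mod n + (b' - a') mod n) mod n" by (metis mod_add_eq)
    thus ?thesis using rb t_def by simp
  qed
  show ?thesis
  proof (cases "t + r < n")
    case True
    have "(b'-a) mod n = t + r" using tr True r0 t0 by simp
    thus ?thesis using True by (intro exI[of _ a]) (simp add: r_def t_def)
  next
    case c1: False
    show ?thesis
    proof (cases "t > r")
      case True
      have "(b - a') mod n = (r - t) mod n"
      proof -
        have "b - a' = (b - a) - (a' - a)" by simp
        thus ?thesis unfolding r_def t_def by (metis mod_diff_eq)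
      qed
      also have "\<dots> = r - t + n" using True r0 t0
        by (subst mod_lo) auto
      finally have 1: "(b - a') mod n = r - t + n" .
      have "(a - a') mod n = (- t) mod n"
      proof -
        have "a - a' = 0 - (a' - a)" by simp
        thus ?thesis unfolding t_def by (metis mod_diff_eq mod_0 diff_0)
      qed
      also have "\<dots> = n - t" using True r0 t0
        by (subst mod_lo) auto
      finally have 2: "(a - a') mod n = n - t" .
      show ?thesis using 1 2 rb by (intro exI[of _ a']) simp
    next
      case c2: False
      show ?thesis
      proof (cases "t + r \<ge> n + 1")
        case True
        have 1: "(b - (a+1)) mod n = r - 1"
        proof -
          have "b - (a+1) = (b - a) - 1" by simp
          hence "(b - (a+1)) mod n = (r - 1) mod n" unfolding r_def by (metis mod_diff_eq mod_mod_trivial)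
          thus ?thesis using True r0 t0 by (simp add: mod_pos_pos_trivial)
        qed
        have 2: "(a - (a+1)) mod n = n - 1"
        proof -
          have "(-1::int) mod n = n - 1" using n
            by (subst mod_lo) auto
          thus ?thesis by simp
        qed
        have 3: "(b' - (a+1)) mod n = t + r - 1 - n"
        proof -
          have "b' - (a+1) = (b' - a) - 1" by simp
          hence "(b' - (a+1)) mod n = (t + r - 1) mod n" using tr by (metis mod_diff_eq mod_mod_trivial)
          also have "\<dots> = t + r - 1 - n" using True r0 t0
            by (subst mod_hi) auto
          finally show ?thesis .
        qed
        have 4: "(a' - (a+1)) mod n = t - 1"
        proof -
          have "a' - (a+1) = (a' - a) - 1" by simp
          hence "(a' - (a+1)) mod n = (t - 1) mod n" unfolding t_def by (metis mod_diff_eq mod_mod_trivial)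
          thus ?thesis using True r0 t0 by (simp add: mod_pos_pos_trivial)
        qed
        show ?thesis using 1 2 3 4 by (intro exI[of _ "a+1"]) simp
      next
        case c3: False
        have tn: "t + r = n" using c1 c3 by simp
        show ?thesis
        proof (cases "r > t")
          case True
          have 1: "(b - (a'+1)) mod n = r - t - 1"
          proof -
            have "b - (a'+1) = ((b - a) - (a' - a)) - 1" by simp
            hence "(b - (a'+1)) mod n = (r - t - 1) mod n" unfolding r_def t_def
              by (metis mod_diff_eq mod_mod_trivial)
            thus ?thesis using True r0 t0 by (simp add: mod_pos_pos_trivial)
          qed
          have 2: "(a - (a'+1)) mod n = n - t - 1"
          proof -
            have "a - (a'+1) = (0 - (a' - a)) - 1" by simp
            hence "(a - (a'+1)) mod n = (0 - t - 1) mod n" unfolding t_def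
              by (metis mod_diff_eq mod_mod_trivial)
            also have "\<dots> = n - t - 1" using True r0 t0 tn
              by (subst mod_lo) auto
            finally show ?thesis .
          qed
          have 3: "(b' - (a'+1)) mod n = r - 1"
          proof -
            have "b' - (a'+1) = (b' - a') - 1" by simp
            hence "(b' - (a'+1)) mod n = (r - 1) mod n" using rb by (metis mod_diff_eq mod_mod_trivial)
            thus ?thesis using True r0 t0 by (simp add: mod_pos_pos_trivial)
          qed
          have 4: "(a' - (a'+1)) mod n = n - 1"
          proof -
            have "(-1::int) mod n = n - 1" using n
              by (subst mod_lo) auto
            thus ?thesis by simp
          qed
          show ?thesis using 1 2 3 4 by (intro exI[of _ "a'+1"]) simp
        next
          case False
          hence rt: "r = t" using c2 by simp
          have "(a' - b) mod n = 0"
          proof -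
            have "a' - b = (a' - a) - (b - a)" by simp
            hence "(a' - b) mod n = (t - r) mod n" unfolding r_def t_def by (metis mod_diff_eq)
            thus ?thesis using rt by simp
          qed
          hence e1: "a' = b" by (rule eq_of_mod0[OF ab(5,6,3,4)])
          have "(b' - a) mod n = 0" using tr tn by simp
          hence e2: "b' = a" by (rule eq_of_mod0[OF ab(7,8,1,2)])
          thus ?thesis using e1 nc by simp
        qed
      qed
    qed
  qed
qed



lemma even_prod_list: "even (prod_list (xs::nat list)) \<Longrightarrow> \<exists>i<length xs. even (xs!i)"
proof (induction xs)
  case Nil thus ?case by simp
next
  case (Cons x xs)
  show ?case
  proof (cases "even x")
    case True thus ?thesis by (intro exI[of _ 0]) simp
  next
    case False
    hence "even (prod_list xs)" using Cons.prems by simp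
    then obtain i where "i < length xs" "even (xs!i)" using Cons.IH by blast
    thus ?thesis by (intro exI[of _ "Suc i"]) simp
  qed
qed

definition red :: "nat list \<Rightarrow> int list \<Rightarrow> int list" where
  "red ns a = map2 (\<lambda>x n. (x - 1) mod int n + 1) a ns"

lemma red_box:
  assumes "length a = length ns" "\<forall>i<length ns. ns!i \<ge> 1"
  shows "red ns a \<in> box ns"
  unfolding box_def red_def
proof (intro CollectI conjI allI impI)
  show "length (map2 (\<lambda>x n. (x - 1) mod int n + 1) a ns) = length ns" using assms by simp
  fix i assume i: "i < length ns"
  have p: "int (ns!i) > 0" using assms i by auto
  have "(a!i - 1) mod int (ns!i) < int (ns!i)" using p by (rule pos_mod_bound)
  moreover have "(a!i - 1) mod int (ns!i) \<ge> 0" using p by (rule pos_mod_sign)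
  ultimately show "1 \<le> map2 (\<lambda>x n. (x - 1) mod int n + 1) a ns ! i"
    "map2 (\<lambda>x n. (x - 1) mod int n + 1) a ns ! i \<le> int (ns ! i)" using i assms by auto
qed

lemma P_iff:
  assumes "ns = bs @ [N]" "length Z = length bs" "\<forall>i<length ns. ns!i \<ge> 1"
  shows "periodic_ext ns (perm_array ns \<phi>) (Z @ [y]) \<longleftrightarrow> \<phi> (red bs Z) = (y - 1) mod int N + 1"
proof -
  have e: "map2 (\<lambda>x n. (x - 1) mod int n + 1) (Z @ [y]) ns = red bs Z @ [(y - 1) mod int N + 1]"
    using assms(1,2) by (simp add: red_def)
  have "red bs Z @ [(y - 1) mod int N + 1] \<in> box ns"
    using red_box[of "Z @ [y]" ns] assms e by (simp add: red_def)
  thus ?thesis unfolding periodic_ext_def perm_array_def e by simp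
qed

lemma in_window:
  assumes "ns = bs @ [N]" "x \<in> box bs" "j < length bs" "c \<le> w" "w \<le> c + int (bs!j) - 1"
     "cm \<le> y" "y \<le> cm + int N - 1"
  shows "x[j := w] @ [y] \<in> window ns ((replicate (length bs) 1)[j := c] @ [cm])"
proof -
  have lx: "length x = length bs" using assms(2) by (simp add: box_def)
  show ?thesis unfolding window_def
  proof (rule CollectI, rule conjI)
    show "length (x[j := w] @ [y]) = length ns" using lx assms(1) by simp
    show "\<forall>i<length ns. ((replicate (length bs) 1)[j := c] @ [cm]) ! i \<le> (x[j := w] @ [y]) ! i \<and>
        (x[j := w] @ [y]) ! i \<le> ((replicate (length bs) 1)[j := c] @ [cm]) ! i + int (ns ! i) - 1"
    proof (intro allI impI)
    fix i assume i: "i < length ns"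
    have "(i < length bs \<and> i \<noteq> j) \<or> i = j \<or> i = length bs" using i assms(1,3) by auto
    thus "((replicate (length bs) 1)[j := c] @ [cm]) ! i \<le> (x[j := w] @ [y]) ! i \<and>
        (x[j := w] @ [y]) ! i \<le> ((replicate (length bs) 1)[j := c] @ [cm]) ! i + int (ns ! i) - 1"
    proof (elim disjE)
      assume h: "i < length bs \<and> i \<noteq> j"
      thus ?thesis using assms(1,2) lx by (auto simp: nth_append box_def)
    next
      assume h: "i = j"
      thus ?thesis using assms lx by (auto simp: nth_append)
    next
      assume h: "i = length bs"
      thus ?thesis using assms lx by (auto simp: nth_append)
    qed
    qed
  qed
qed

definition lift :: "int \<Rightarrow> int \<Rightarrow> int \<Rightarrow> int" where
  "lift c N v = (if c \<le> v then v else v + N)"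

lemma lift_props:
  assumes "1 \<le> v" "v \<le> N" "1 \<le> c" "c \<le> N"
  shows "c \<le> lift c N v" "lift c N v \<le> c + N - 1"
    "(lift c N v - 1) mod N + 1 = v"
    "(lift c N v + 1 - 1) mod N + 1 = v mod N + 1"
proof -
  show "c \<le> lift c N v" "lift c N v \<le> c + N - 1" using assms by (auto simp: lift_def)
  have m: "lift c N v mod N = v mod N" by (simp add: lift_def)
  have "(lift c N v - 1) mod N = (v - 1) mod N"
    using m by (metis mod_diff_eq)
  also have "\<dots> = v - 1" using assms by (intro mod_pos_pos_trivial) auto
  finally show "(lift c N v - 1) mod N + 1 = v" by simp
  show "(lift c N v + 1 - 1) mod N + 1 = v mod N + 1" using m by simp
qed

lemma succ_mod: "1 \<le> v \<Longrightarrow> v \<le> (N::int) \<Longrightarrow> v mod N + 1 = (if v < N then v + 1 else 1)"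
  by (auto simp: mod_pos_pos_trivial)




lemma red_update:
  assumes "x \<in> box bs" "j < length bs" "(w - 1) mod int (bs!j) + 1 = u"
  shows "red bs (x[j := w]) = x[j := u]"
proof -
  have lx: "length x = length bs" using assms(1) by (simp add: box_def)
  show ?thesis
  proof (rule nth_equalityI)
    show "length (red bs (x[j := w])) = length (x[j := u])" using lx by (simp add: red_def)
    fix i assume i: "i < length (red bs (x[j := w]))"
    hence i': "i < length bs" using lx by (simp add: red_def)
    show "red bs (x[j := w]) ! i = x[j := u] ! i"
    proof (cases "i = j")
      case True thus ?thesis using assms i' lx by (simp add: red_def)
    next
      case False
      have b: "1 \<le> x!i" "x!i \<le> int (bs!i)" using assms(1) i' by (auto simp: box_def)
      have "(x!i - 1) mod int (bs!i) = x!i - 1" using b by (intro mod_pos_pos_trivial) auto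
      thus ?thesis using False i' lx by (simp add: red_def)
    qed
  qed
qed

theorem mainTheorem10:
  fixes ns :: "nat list" and m n :: nat and \<phi> :: "int list \<Rightarrow> int"
  assumes "length ns = m" and "m \<ge> 2"
    and "\<forall>i<m. ns!i \<ge> 2"
    and "n = prod_list (butlast ns)" and "n = last ns"
    and "even n"
    and "bij_betw \<phi> (box (butlast ns)) {1..int n}"
    and "theta ns < (real n - 2) / (2 * real n)"
  shows "(\<exists>k. length k = m \<and> has_repeated_diff (window_dots ns (perm_array ns \<phi>) k))
     \<and> (is_costas ns (perm_array ns \<phi>) \<longrightarrow> \<not> is_periodic_costas ns (perm_array ns \<phi>))"
proof -
  define bs where "bs = butlast ns"
  have ns_ne: "ns \<noteq> []" using assms(1,2) by auto
  have nsbs: "ns = bs @ [n]" using ns_ne assms(5) unfolding bs_def by simp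
  have lbs: "length bs = m - 1" using assms(1) by (simp add: bs_def)
  have nspos: "\<forall>i<length ns. ns!i \<ge> 1" using assms(1,3) by (metis Suc_1 Suc_leD)
  have bsj: "\<And>i. i < m - 1 \<Longrightarrow> bs!i = ns!i" unfolding bs_def using assms(1)
    by (simp add: nth_butlast)
  have npos: "n \<ge> 2" using assms(3,5,1,2) ns_ne by (metis diff_less last_conv_nth length_greater_0_conv zero_less_one)
  obtain j where j: "j < m - 1" "even (ns!j)"
    using even_prod_list[of bs] assms(4,6) lbs bsj unfolding bs_def by auto
  have jm: "j < m" using j by simp
  have nj3: "ns!j \<ge> 3"
  proof (rule ccontr)
    assume "\<not> ns!j \<ge> 3"
    moreover have "ns!j \<ge> 2" using assms(3) jm by blast
    ultimately have nj2: "ns!j = 2" by linarith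
    define S where "S = {i. i < length ns - 1 \<and> even (ns!i)}"
    define g where "g i = (real (ns!i) - 1) / real (ns!i)" for i
    have fS: "finite S" unfolding S_def by simp
    have jS: "j \<in> S" unfolding S_def using j assms(1) by simp
    have g01: "0 \<le> g i \<and> g i \<le> 1" if "i \<in> S" for i
    proof -
      have "ns!i \<ge> 2" using that assms(1,3) unfolding S_def by auto
      thus ?thesis unfolding g_def by (auto simp: divide_simps)
    qed
    have "prod g S = g j * prod g (S - {j})" using fS jS by (simp add: prod.remove)
    also have "\<dots> \<le> g j * 1"
    proof (rule mult_left_mono)
      show "prod g (S - {j}) \<le> 1" using g01 by (intro prod_le_1) auto
      show "0 \<le> g j" using g01 jS by auto
    qed
    also have "g j = 1/2" using nj2 unfolding g_def by simp
    finally have "prod g S \<le> 1/2" by simp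
    hence "theta ns \<ge> 1/2" unfolding theta_def S_def[symmetric] g_def[symmetric] by simp
    moreover have "(real n - 2) / (2 * real n) < 1/2" using npos by (simp add: divide_simps)
    ultimately show False using assms(8) by linarith
  qed
  define Bx where "Bx = box bs"
  have finB: "finite Bx" using bij_betw_finite[OF assms(7)] by (simp add: Bx_def bs_def)
  have cardB: "card Bx = n" using bij_betw_same_card[OF assms(7)] by (simp add: Bx_def bs_def)
  have injphi: "inj_on \<phi> Bx" using assms(7) by (simp add: Bx_def bs_def bij_betw_def)
  have phiB: "\<And>x. x \<in> Bx \<Longrightarrow> 1 \<le> \<phi> x \<and> \<phi> x \<le> int n"
    using assms(7) unfolding Bx_def bs_def bij_betw_def by auto
  have Bx_iff: "\<And>x. x \<in> Bx \<longleftrightarrow> length x = m - 1 \<and> (\<forall>i<m-1. 1 \<le> x!i \<and> x!i \<le> int (ns!i))"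
    unfolding Bx_def box_def using lbs bsj by auto
  define N where "N = int (ns!j)"
  have N3: "N \<ge> 3" using nj3 by (simp add: N_def)
  have bsjN: "int (bs!j) = N" using bsj j by (simp add: N_def)
  define s where "s x = x[j := x!j mod N + 1]" for x
  have xjB: "\<And>x. x \<in> Bx \<Longrightarrow> 1 \<le> x!j \<and> x!j \<le> N" using Bx_iff j unfolding N_def by blast
  have sj: "\<And>x. x \<in> Bx \<Longrightarrow> s x ! j = (if x!j < N then x!j + 1 else 1)"
  proof -
    fix x assume x: "x \<in> Bx"
    have "length x = m - 1" using x Bx_iff by blast
    thus "s x ! j = (if x!j < N then x!j + 1 else 1)"
      using succ_mod[of "x!j" N] xjB[OF x] j by (simp add: s_def)
  qed
  have sB: "\<And>x. x \<in> Bx \<Longrightarrow> s x \<in> Bx"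
  proof -
    fix x assume x: "x \<in> Bx"
    have lx: "length x = m - 1" using x Bx_iff by blast
    have "1 \<le> s x ! j \<and> s x ! j \<le> N" using sj[OF x] xjB[OF x] N3 by auto
    moreover have "\<And>i. i < m - 1 \<Longrightarrow> i \<noteq> j \<Longrightarrow> s x ! i = x ! i" by (simp add: s_def)
    ultimately show "s x \<in> Bx" using x lx unfolding Bx_iff
      by (auto simp: s_def N_def) (metis nth_list_update_eq nth_list_update_neq)+
  qed
  have sne: "\<And>x. x \<in> Bx \<Longrightarrow> s x \<noteq> x"
  proof
    fix x assume x: "x \<in> Bx" and e: "s x = x"
    have "s x ! j \<noteq> x ! j" using sj[OF x] xjB[OF x] N3 by auto
    thus False using e by simp
  qed
  have ssne: "\<And>x. x \<in> Bx \<Longrightarrow> s (s x) \<noteq> x"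
  proof
    fix x assume x: "x \<in> Bx" and e: "s (s x) = x"
    have "s (s x) ! j \<noteq> x ! j" using sj[OF sB[OF x]] sj[OF x] xjB[OF x] N3 by auto
    thus False using e by simp
  qed
  define D where "D x = (\<phi> (s x) - \<phi> x) mod int n" for x
  have DB: "D ` Bx \<subseteq> {1..int n - 1}"
  proof
    fix d assume "d \<in> D ` Bx"
    then obtain x where x: "x \<in> Bx" and d: "d = D x" by blast
    have r1: "0 \<le> d" "d < int n" using npos d by (simp_all add: D_def)
    have "d \<noteq> 0"
    proof
      assume "d = 0"
      hence "\<phi> (s x) = \<phi> x" using eq_of_mod0[of "\<phi> (s x)" "int n" "\<phi> x"] phiB[OF x] phiB[OF sB[OF x]] d
        by (simp add: D_def)
      hence "s x = x" using injphi sB[OF x] x by (simp add: inj_on_def)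
      thus False using sne[OF x] by simp
    qed
    thus "d \<in> {1..int n - 1}" using r1 by auto
  qed
  have "\<not> inj_on D Bx"
  proof
    assume "inj_on D Bx"
    hence "card Bx \<le> card {1..int n - 1}" using DB by (intro card_inj_on_le) auto
    thus False using cardB npos by simp
  qed
  then obtain x x' where x: "x \<in> Bx" and x': "x' \<in> Bx" and xx: "x \<noteq> x'" and Dxx: "D x = D x'"
    unfolding inj_on_def by blast
  have hx: "1 \<le> x!j" "x!j \<le> N" using xjB[OF x] by auto
  have hx': "1 \<le> x'!j" "x'!j \<le> N" using xjB[OF x'] by auto
  have "\<exists>c. 1 \<le> c \<and> c \<le> 3 \<and> lift c N (x!j) + 1 \<le> c + N - 1 \<and> lift c N (x'!j) + 1 \<le> c + N - 1"
  proof (cases "x!j \<noteq> N \<and> x'!j \<noteq> N")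
    case True thus ?thesis using hx hx' by (intro exI[of _ 1]) (auto simp: lift_def)
  next
    case F1: False
    show ?thesis
    proof (cases "x!j \<noteq> 1 \<and> x'!j \<noteq> 1")
      case True thus ?thesis using hx hx' by (intro exI[of _ 2]) (auto simp: lift_def)
    next
      case False thus ?thesis using F1 hx hx' N3 by (intro exI[of _ 3]) (auto simp: lift_def)
    qed
  qed
  then obtain c where c: "1 \<le> c" "c \<le> 3" "lift c N (x!j) + 1 \<le> c + N - 1" "lift c N (x'!j) + 1 \<le> c + N - 1"
    by blast
  have cN: "c \<le> N" using c N3 by simp
  note L = lift_props[OF hx c(1) cN] and L' = lift_props[OF hx' c(1) cN]
  define X where "X = x[j := lift c N (x!j)]"
  define Y where "Y = x[j := lift c N (x!j) + 1]"
  define X' where "X' = x'[j := lift c N (x'!j)]"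
  define Y' where "Y' = x'[j := lift c N (x'!j) + 1]"
  have xbox: "x \<in> box bs" "x' \<in> box bs" using x x' by (simp_all add: Bx_def)
  have jbs: "j < length bs" using j lbs by simp
  have rX: "red bs X = x" unfolding X_def using red_update[OF xbox(1) jbs, of "lift c N (x!j)" "x!j"] L bsjN by simp
  have rX': "red bs X' = x'" unfolding X'_def using red_update[OF xbox(2) jbs, of "lift c N (x'!j)" "x'!j"] L' bsjN by simp
  have rY: "red bs Y = s x" unfolding Y_def s_def using red_update[OF xbox(1) jbs, of "lift c N (x!j) + 1" "x!j mod N + 1"] L bsjN by simp
  have rY': "red bs Y' = s x'" unfolding Y'_def s_def using red_update[OF xbox(2) jbs, of "lift c N (x'!j) + 1" "x'!j mod N + 1"] L' bsjN by simp
  define a where "a = \<phi> x"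
  define b where "b = \<phi> (s x)"
  define a' where "a' = \<phi> x'"
  define b' where "b' = \<phi> (s x')"
  have ra: "1 \<le> a" "a \<le> int n" "1 \<le> b" "b \<le> int n" "1 \<le> a'" "a' \<le> int n" "1 \<le> b'" "b' \<le> int n"
    using phiB[OF x] phiB[OF x'] phiB[OF sB[OF x]] phiB[OF sB[OF x']] by (simp_all add: a_def b_def a'_def b'_def)
  have eqD: "(b - a) mod int n = (b' - a') mod int n" using Dxx by (simp add: D_def a_def b_def a'_def b'_def)
  have nc: "\<not> (a' = b \<and> b' = a)"
  proof
    assume h: "a' = b \<and> b' = a"
    hence "x' = s x" using injphi x' sB[OF x] unfolding a'_def b_def inj_on_def by blast
    moreover have "s x' = x" using h injphi x sB[OF x'] unfolding a_def b'_def inj_on_def by blast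
    ultimately show False using ssne[OF x] by simp
  qed
  have n0: "int n > 0" using npos by simp
  obtain cm where cm: "(b-cm) mod int n - (a-cm) mod int n = (b'-cm) mod int n - (a'-cm) mod int n"
    using shift_choice[OF n0 ra eqD nc] by blast
  define yv where "yv v = cm + (v - cm) mod int n" for v
  have yv: "cm \<le> yv v \<and> yv v \<le> cm + int n - 1 \<and> (yv v - 1) mod int n + 1 = v"
    if "1 \<le> v" "v \<le> int n" for v
  proof -
    have "(yv v - 1) mod int n = ((cm - 1) + (v - cm) mod int n) mod int n" by (simp add: yv_def algebra_simps)
    also have "\<dots> = ((cm - 1) + (v - cm)) mod int n" by (simp add: mod_add_right_eq)
    also have "\<dots> = v - 1" using that by (simp add: mod_pos_pos_trivial)
    finally have "(yv v - 1) mod int n + 1 = v" by simp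
    moreover have "0 \<le> (v - cm) mod int n" "(v - cm) mod int n < int n" using n0 by simp_all
    ultimately show ?thesis by (simp add: yv_def)
  qed
  define k where "k = (replicate (length bs) 1)[j := c] @ [cm]"
  define A where "A = perm_array ns \<phi>"
  have dot: "Z @ [yv v] \<in> window_dots ns A k"
    if "Z = x0[j := w]" "x0 \<in> Bx" "c \<le> w" "w \<le> c + N - 1" "v = \<phi> (red bs Z)" "red bs Z \<in> Bx" for Z x0 w v
  proof -
    have vr: "1 \<le> v" "v \<le> int n" using phiB[OF that(6)] that(5) by auto
    have x0b: "x0 \<in> box bs" using that(2) by (simp add: Bx_def)
    have lZ: "length Z = length bs" using x0b that(1) by (simp add: box_def)
    have w: "Z @ [yv v] \<in> window ns k"
      using in_window[OF nsbs x0b jbs, of c w cm "yv v"] that(1,3,4) bsjN yv[OF vr] by (simp add: k_def)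
    have "periodic_ext ns A (Z @ [yv v])"
      using P_iff[OF nsbs lZ nspos, of \<phi> "yv v"] yv[OF vr] that(5) by (simp add: A_def)
    thus ?thesis using w by (simp add: window_dots_def)
  qed
  have p1: "X @ [yv a] \<in> window_dots ns A k"
    by (rule dot[OF X_def x]) (use L rX x in \<open>simp_all add: a_def\<close>)
  have p2: "Y @ [yv b] \<in> window_dots ns A k"
    by (rule dot[OF Y_def x]) (use L c rY sB[OF x] in \<open>simp_all add: b_def\<close>)
  have p3: "X' @ [yv a'] \<in> window_dots ns A k"
    by (rule dot[OF X'_def x']) (use L' rX' x' in \<open>simp_all add: a'_def\<close>)
  have p4: "Y' @ [yv b'] \<in> window_dots ns A k"
    by (rule dot[OF Y'_def x']) (use L' c rY' sB[OF x'] in \<open>simp_all add: b'_def\<close>)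
  have lx: "length x = m - 1" "length x' = m - 1" using x x' Bx_iff by blast+
  have ne1: "X @ [yv a] \<noteq> Y @ [yv b]"
  proof
    assume "X @ [yv a] = Y @ [yv b]"
    hence "X ! j = Y ! j" by simp
    thus False using lx j by (simp add: X_def Y_def)
  qed
  have ne2: "X' @ [yv a'] \<noteq> Y' @ [yv b']"
  proof
    assume "X' @ [yv a'] = Y' @ [yv b']"
    hence "X' ! j = Y' ! j" by simp
    thus False using lx j by (simp add: X'_def Y'_def)
  qed
  have ne3: "(X @ [yv a], Y @ [yv b]) \<noteq> (X' @ [yv a'], Y' @ [yv b'])"
  proof
    assume "(X @ [yv a], Y @ [yv b]) = (X' @ [yv a'], Y' @ [yv b'])"
    hence "X = X'" by simp
    hence "x = x'" using rX rX' by simp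
    thus False using xx by simp
  qed
  have dv: "diff_vec (X @ [yv a]) (Y @ [yv b]) = diff_vec (X' @ [yv a']) (Y' @ [yv b'])"
  proof -
    have l: "length X = m - 1" "length Y = m - 1" "length X' = m - 1" "length Y' = m - 1"
      using lx by (simp_all add: X_def Y_def X'_def Y'_def)
    have e1: "map2 (-) Y X = map2 (-) Y' X'"
    proof (rule nth_equalityI)
      show "length (map2 (-) Y X) = length (map2 (-) Y' X')" using l by simp
      fix i assume "i < length (map2 (-) Y X)"
      hence i: "i < m - 1" using l by simp
      show "map2 (-) Y X ! i = map2 (-) Y' X' ! i"
        using i l lx by (cases "i = j") (simp_all add: X_def Y_def X'_def Y'_def)
    qed
    have e2: "yv b - yv a = yv b' - yv a'" using cm by (simp add: yv_def)
    show ?thesis unfolding diff_vec_def using l e1 e2 by simp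
  qed
  have rep: "has_repeated_diff (window_dots ns A k)"
    unfolding has_repeated_diff_def
    by (rule bexI[OF _ p1], rule bexI[OF _ p2], rule bexI[OF _ p3], rule bexI[OF _ p4])
       (intro conjI ne1 ne2 ne3 dv)
  have lk: "length k = m" using lbs assms(1,2) by (simp add: k_def)
  have ex: "\<exists>k. length k = m \<and> has_repeated_diff (window_dots ns (perm_array ns \<phi>) k)"
    using rep lk unfolding A_def by blast
  moreover have "\<not> is_periodic_costas ns (perm_array ns \<phi>)"
    using rep lk assms(1) unfolding is_periodic_costas_def A_def by auto
  ultimately show ?thesis by blast
qed


end
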